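(* Let $G$ be a graph with vertex set $V$, each vertex carrying a finite-dimensional Hilbert space, let $\alpha$ be a QCA of range $R$, let $F\subseteq V$, and let $\mathcal{P}(\alpha,F)$ be the commutant of $\mathcal{A}(\mathrm{Int}(F))$ in $\alpha(\mathcal{A}(F))$. Then $\mathcal{P}(\alpha,F)$ is a $2R$-locally factorizable algebra.
   Context: For a set $S$ of sites, $\mathcal{A}(S)$ is the algebra of operators supported on $S$ (operators on $\bigotimes_{x\in S}\mathcal{H}_x$ tensored with the identity). A QCA of range $R$ is a $*$-automorphism $\alpha$ of the full operator algebra such that for each site $x$ and each $O$ supported on $\{x\}$, $\alpha(O)$ is supported on sites within graph distance $R$ of $x$. $\mathrm{Int}(F)=\{x: \text{all sites within distance } R \text{ of } x \text{ lie in } F\}$. An algebra $\mathcal{A}$ is $l$-locally factorizable if whenever $O\in\mathcal{A}$ is supported on $T_1\cup T_2$ with $T_1,T_2$ disjoint and $\mathrm{dist}(T_1,T_2)>l$, and $O=\sum_\beta A(\beta)O_1^\beta O_2^\beta$ is a singular value decomposition in the Hilbert–Schmidt inner product ($A(\beta)\ne0$, $O_i^\beta$ supported on $T_i$), then all $O_i^\beta\in\mathcal{A}$. *)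

theory Defs
  imports Complex_Main
begin

text \<open>Sites are the vertices V (finite) of a graph with edge relation E (taken undirected).
 Site x carries the Hilbert space C^(d x); the tensor product basis is indexed by
 configurations. Operators on the full Hilbert space are matrices indexed by configurations.\<close>

type_synonym 'v op = "('v \<Rightarrow> nat) \<Rightarrow> ('v \<Rightarrow> nat) \<Rightarrow> complex"

definition conf :: "'v set \<Rightarrow> ('v \<Rightarrow> nat) \<Rightarrow> ('v \<Rightarrow> nat) set" where
  "conf V d = {s. (\<forall>x\<in>V. s x < d x) \<and> (\<forall>x. x \<notin> V \<longrightarrow> s x = 0)}"

definition Ops :: "'v set \<Rightarrow> ('v \<Rightarrow> nat) \<Rightarrow> 'v op set" where
  "Ops V d = {X. \<forall>s t. (s \<notin> conf V d \<or> t \<notin> conf V d) \<longrightarrow> X s t = 0}"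

definition opmult :: "'v set \<Rightarrow> ('v \<Rightarrow> nat) \<Rightarrow> 'v op \<Rightarrow> 'v op \<Rightarrow> 'v op" where
  "opmult V d X Y = (\<lambda>s t. \<Sum>u\<in>conf V d. X s u * Y u t)"

definition opadj :: "'v op \<Rightarrow> 'v op" where
  "opadj X = (\<lambda>s t. cnj (X t s))"

definition opid :: "'v set \<Rightarrow> ('v \<Rightarrow> nat) \<Rightarrow> 'v op" where
  "opid V d = (\<lambda>s t. if s \<in> conf V d \<and> s = t then 1 else 0)"

definition hs :: "'v set \<Rightarrow> ('v \<Rightarrow> nat) \<Rightarrow> 'v op \<Rightarrow> 'v op \<Rightarrow> complex" where
  "hs V d X Y = (\<Sum>s\<in>conf V d. \<Sum>t\<in>conf V d. cnj (X s t) * Y s t)"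

definition restr :: "'v set \<Rightarrow> ('v \<Rightarrow> nat) \<Rightarrow> ('v \<Rightarrow> nat)" where
  "restr S s = (\<lambda>x. if x \<in> S then s x else 0)"

text \<open>X is supported on S: X = A \<otimes> identity on the sites outside S.\<close>
definition supported_on :: "'v set \<Rightarrow> ('v \<Rightarrow> nat) \<Rightarrow> 'v set \<Rightarrow> 'v op \<Rightarrow> bool" where
  "supported_on V d S X \<longleftrightarrow> X \<in> Ops V d \<and>
     (\<exists>g. \<forall>s\<in>conf V d. \<forall>t\<in>conf V d.
        X s t = (if (\<forall>x\<in>V - S. s x = t x) then g (restr S s) (restr S t) else 0))"

definition alg :: "'v set \<Rightarrow> ('v \<Rightarrow> nat) \<Rightarrow> 'v set \<Rightarrow> 'v op set" where
  "alg V d S = {X. supported_on V d S X}"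

inductive walk :: "('v \<Rightarrow> 'v \<Rightarrow> bool) \<Rightarrow> nat \<Rightarrow> 'v \<Rightarrow> 'v \<Rightarrow> bool" for E where
  walk_refl: "walk E 0 x x"
| walk_step: "E x y \<or> E y x \<Longrightarrow> walk E n y z \<Longrightarrow> walk E (Suc n) x z"

definition within_dist :: "('v \<Rightarrow> 'v \<Rightarrow> bool) \<Rightarrow> nat \<Rightarrow> 'v \<Rightarrow> 'v \<Rightarrow> bool" where
  "within_dist E n x y \<longleftrightarrow> (\<exists>k\<le>n. walk E k x y)"

definition qca :: "'v set \<Rightarrow> ('v \<Rightarrow> nat) \<Rightarrow> ('v \<Rightarrow> 'v \<Rightarrow> bool) \<Rightarrow> nat \<Rightarrow> ('v op \<Rightarrow> 'v op) \<Rightarrow> bool" where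
  "qca V d E R \<alpha> \<longleftrightarrow>
     bij_betw \<alpha> (Ops V d) (Ops V d) \<and>
     (\<forall>X\<in>Ops V d. \<forall>Y\<in>Ops V d. \<forall>c::complex.
        \<alpha> (\<lambda>s t. c * X s t + Y s t) = (\<lambda>s t. c * \<alpha> X s t + \<alpha> Y s t)) \<and>
     (\<forall>X\<in>Ops V d. \<forall>Y\<in>Ops V d. \<alpha> (opmult V d X Y) = opmult V d (\<alpha> X) (\<alpha> Y)) \<and>
     (\<forall>X\<in>Ops V d. \<alpha> (opadj X) = opadj (\<alpha> X)) \<and>
     (\<forall>x\<in>V. \<forall>X\<in>alg V d {x}. \<alpha> X \<in> alg V d {y\<in>V. within_dist E R x y})"

definition Int_reg :: "'v set \<Rightarrow> ('v \<Rightarrow> 'v \<Rightarrow> bool) \<Rightarrow> nat \<Rightarrow> 'v set \<Rightarrow> 'v set" where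
  "Int_reg V E R F = {x\<in>V. \<forall>y\<in>V. within_dist E R x y \<longrightarrow> y \<in> F}"

definition Palg :: "'v set \<Rightarrow> ('v \<Rightarrow> nat) \<Rightarrow> ('v \<Rightarrow> 'v \<Rightarrow> bool) \<Rightarrow> nat \<Rightarrow> ('v op \<Rightarrow> 'v op) \<Rightarrow> 'v set \<Rightarrow> 'v op set" where
  "Palg V d E R \<alpha> F = {X \<in> \<alpha> ` alg V d F.
      \<forall>Y\<in>alg V d (Int_reg V E R F). opmult V d X Y = opmult V d Y X}"

definition is_subalgebra :: "'v set \<Rightarrow> ('v \<Rightarrow> nat) \<Rightarrow> 'v op set \<Rightarrow> bool" where
  "is_subalgebra V d \<A> \<longleftrightarrow> \<A> \<subseteq> Ops V d \<and> opid V d \<in> \<A> \<and>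
     (\<forall>X\<in>\<A>. \<forall>Y\<in>\<A>. \<forall>c::complex. (\<lambda>s t. c * X s t + Y s t) \<in> \<A>) \<and>
     (\<forall>X\<in>\<A>. \<forall>Y\<in>\<A>. opmult V d X Y \<in> \<A>)"

text \<open>l-local factorizability; an SVD is a finite index set B, positive singular values A,
  and Hilbert--Schmidt orthonormal families Q1 (supported on T1), Q2 (supported on T2).\<close>
definition loc_fact :: "'v set \<Rightarrow> ('v \<Rightarrow> nat) \<Rightarrow> ('v \<Rightarrow> 'v \<Rightarrow> bool) \<Rightarrow> nat \<Rightarrow> 'v op set \<Rightarrow> bool" where
  "loc_fact V d E l \<A> \<longleftrightarrow>
    (\<forall>T1 T2 X (B::nat set) (A::nat \<Rightarrow> real) Q1 Q2.
      T1 \<subseteq> V \<and> T2 \<subseteq> V \<and> T1 \<inter> T2 = {} \<and>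
      (\<forall>x\<in>T1. \<forall>y\<in>T2. \<not> within_dist E l x y) \<and>
      X \<in> \<A> \<and> X \<in> alg V d (T1 \<union> T2) \<and>
      finite B \<and> (\<forall>\<beta>\<in>B. A \<beta> > 0) \<and>
      (\<forall>\<beta>\<in>B. Q1 \<beta> \<in> alg V d T1 \<and> Q2 \<beta> \<in> alg V d T2) \<and>
      (\<forall>\<beta>\<in>B. \<forall>\<gamma>\<in>B. hs V d (Q1 \<beta>) (Q1 \<gamma>) = (if \<beta> = \<gamma> then 1 else 0)) \<and>
      (\<forall>\<beta>\<in>B. \<forall>\<gamma>\<in>B. hs V d (Q2 \<beta>) (Q2 \<gamma>) = (if \<beta> = \<gamma> then 1 else 0)) \<and>
      X = (\<lambda>s t. \<Sum>\<beta>\<in>B. complex_of_real (A \<beta>) * opmult V d (Q1 \<beta>) (Q2 \<beta>) s t)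
      \<longrightarrow> (\<forall>\<beta>\<in>B. Q1 \<beta> \<in> \<A> \<and> Q2 \<beta> \<in> \<A>))"

end

theory Submission
  imports Defs "HOL-Library.FuncSet"
begin

lemma finite_conf: assumes "finite V" shows "finite (conf V d)"
proof -
  have "conf V d \<subseteq> (\<lambda>f x. if x \<in> V then f x else 0) ` (PiE V (\<lambda>x. {..<d x}))"
  proof
    fix s assume s: "s \<in> conf V d"
    have "restrict s V \<in> PiE V (\<lambda>x. {..<d x})" using s by (auto simp: conf_def PiE_iff)
    moreover have "s = (\<lambda>x. if x \<in> V then restrict s V x else 0)" using s by (auto simp: conf_def)
    ultimately show "s \<in> (\<lambda>f x. if x \<in> V then f x else 0) ` (PiE V (\<lambda>x. {..<d x}))" by blast
  qed
  then show ?thesis by (rule finite_subset) (auto intro: finite_PiE assms)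
qed

lemma conf_out: "s \<in> conf V d \<Longrightarrow> x \<notin> V \<Longrightarrow> s x = 0"
  by (simp add: conf_def)

lemma conf_lt: "s \<in> conf V d \<Longrightarrow> x \<in> V \<Longrightarrow> s x < d x"
  by (simp add: conf_def)

lemma alg_ops: "X \<in> alg V d S \<Longrightarrow> X \<in> Ops V d"
  by (simp add: alg_def supported_on_def)

lemma Ops_zero: "X \<in> Ops V d \<Longrightarrow> s \<notin> conf V d \<or> t \<notin> conf V d \<Longrightarrow> X s t = 0"
  by (simp add: Ops_def)

lemma alg_zero:
  assumes "X \<in> alg V d S" "s \<in> conf V d" "t \<in> conf V d" "x \<in> V" "x \<notin> S" "s x \<noteq> t x"
  shows "X s t = 0"
proof -
  from assms(1) obtain g where g: "\<forall>s\<in>conf V d. \<forall>t\<in>conf V d.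
        X s t = (if (\<forall>x\<in>V - S. s x = t x) then g (restr S s) (restr S t) else 0)"
    by (auto simp: alg_def supported_on_def)
  show ?thesis using g assms by auto
qed

lemma alg_inv:
  assumes "X \<in> alg V d S" "s \<in> conf V d" "t \<in> conf V d" "s' \<in> conf V d" "t' \<in> conf V d"
    "\<forall>x\<in>V - S. s x = t x" "\<forall>x\<in>V - S. s' x = t' x" "restr S s = restr S s'" "restr S t = restr S t'"
  shows "X s t = X s' t'"
proof -
  from assms(1) obtain g where g: "\<forall>s\<in>conf V d. \<forall>t\<in>conf V d.
        X s t = (if (\<forall>x\<in>V - S. s x = t x) then g (restr S s) (restr S t) else 0)"
    by (auto simp: alg_def supported_on_def)
  show ?thesis using g assms by simp
qed

lemma alg_intro:
  assumes ops: "X \<in> Ops V d"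
    and z: "\<And>s t x. s \<in> conf V d \<Longrightarrow> t \<in> conf V d \<Longrightarrow> x \<in> V \<Longrightarrow> x \<notin> S \<Longrightarrow> s x \<noteq> t x \<Longrightarrow> X s t = 0"
    and inv: "\<And>s t s' t'. s \<in> conf V d \<Longrightarrow> t \<in> conf V d \<Longrightarrow> s' \<in> conf V d \<Longrightarrow> t' \<in> conf V d \<Longrightarrow>
      \<forall>x\<in>V - S. s x = t x \<Longrightarrow> \<forall>x\<in>V - S. s' x = t' x \<Longrightarrow> restr S s = restr S s' \<Longrightarrow> restr S t = restr S t' \<Longrightarrow>
      X s t = X s' t'"
  shows "X \<in> alg V d S"
proof -
  define P where "P a b p \<longleftrightarrow> fst p \<in> conf V d \<and> snd p \<in> conf V d \<and> (\<forall>x\<in>V - S. fst p x = snd p x)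
     \<and> restr S (fst p) = a \<and> restr S (snd p) = b" for a b p
  define g where "g a b = (if \<exists>p. P a b p then X (fst (SOME p. P a b p)) (snd (SOME p. P a b p)) else 0)" for a b
  have "\<forall>s\<in>conf V d. \<forall>t\<in>conf V d.
        X s t = (if (\<forall>x\<in>V - S. s x = t x) then g (restr S s) (restr S t) else 0)"
  proof (intro ballI)
    fix s t assume s: "s \<in> conf V d" and t: "t \<in> conf V d"
    show "X s t = (if (\<forall>x\<in>V - S. s x = t x) then g (restr S s) (restr S t) else 0)"
    proof (cases "\<forall>x\<in>V - S. s x = t x")
      case True
      have ex: "\<exists>p. P (restr S s) (restr S t) p" using s t True unfolding P_def by (intro exI[of _ "(s,t)"]) auto
      have Pq: "P (restr S s) (restr S t) (SOME p. P (restr S s) (restr S t) p)" by (rule someI_ex[OF ex])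
      have "X s t = X (fst (SOME p. P (restr S s) (restr S t) p)) (snd (SOME p. P (restr S s) (restr S t) p))"
        using Pq s t True unfolding P_def by (intro inv) auto
      then show ?thesis using True ex by (simp add: g_def)
    next
      case False
      then show ?thesis using z s t by auto
    qed
  qed
  then show ?thesis using ops by (auto simp: alg_def supported_on_def)
qed


lemma opmult_disj:
  assumes fin: "finite V" and X: "X \<in> alg V d A" and Y: "Y \<in> alg V d B" and AB: "A \<inter> B = {}"
    and s: "s \<in> conf V d" and t: "t \<in> conf V d"
  shows "opmult V d X Y s t = X s (\<lambda>x. if x \<in> A then t x else s x) * Y (\<lambda>x. if x \<in> A then t x else s x) t"
proof -
  let ?m = "\<lambda>x. if x \<in> A then t x else s x"
  have m: "?m \<in> conf V d" using s t by (auto simp: conf_def)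
  have z: "\<forall>u\<in>conf V d - {?m}. X s u * Y u t = 0"
  proof
    fix u assume u: "u \<in> conf V d - {?m}"
    show "X s u * Y u t = 0"
    proof (rule ccontr)
      assume "X s u * Y u t \<noteq> 0"
      then have a: "X s u \<noteq> 0" and b: "Y u t \<noteq> 0" by auto
      have 1: "\<forall>x\<in>V - A. s x = u x" using alg_zero[OF X s] a u by blast
      have 2: "\<forall>x\<in>V - B. u x = t x" using alg_zero[OF Y _ t] b u by blast
      have "u = ?m"
      proof
        fix x show "u x = ?m x"
        proof (cases "x \<in> V")
          case True then show ?thesis using 1 2 AB by auto
        next
          case False then show ?thesis using conf_out[of u V d x] conf_out[of s V d x] conf_out[of t V d x] u s t by auto
        qed
      qed
      with u show False by auto
    qed
  qed
  have "opmult V d X Y s t = (\<Sum>u\<in>conf V d. X s u * Y u t)" by (simp add: opmult_def)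
  also have "\<dots> = X s ?m * Y ?m t + (\<Sum>u\<in>conf V d - {?m}. X s u * Y u t)"
    by (rule sum.remove[OF finite_conf[OF fin] m])
  also have "(\<Sum>u\<in>conf V d - {?m}. X s u * Y u t) = 0" using z by (intro sum.neutral) blast
  finally show ?thesis by simp
qed

lemma alg_commute:
  assumes fin: "finite V" and X: "X \<in> alg V d A" and Y: "Y \<in> alg V d B" and AB: "A \<inter> B = {}"
  shows "opmult V d X Y = opmult V d Y X"
proof (intro ext)
  fix s t
  show "opmult V d X Y s t = opmult V d Y X s t"
  proof (cases "s \<in> conf V d \<and> t \<in> conf V d")
    case False
    then show ?thesis using Ops_zero[OF alg_ops[OF X]] Ops_zero[OF alg_ops[OF Y]]
      by (auto simp: opmult_def)
  next
    case True
    then have s: "s \<in> conf V d" and t: "t \<in> conf V d" by auto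
    let ?m1 = "\<lambda>x. if x \<in> A then t x else s x"
    let ?m2 = "\<lambda>x. if x \<in> B then t x else s x"
    have m1: "?m1 \<in> conf V d" and m2: "?m2 \<in> conf V d" using s t by (auto simp: conf_def)
    have e1: "opmult V d X Y s t = X s ?m1 * Y ?m1 t" by (rule opmult_disj[OF fin X Y AB s t])
    have e2: "opmult V d Y X s t = Y s ?m2 * X ?m2 t"
      by (rule opmult_disj[OF fin Y X _ s t]) (use AB in auto)
    show ?thesis
    proof (cases "\<forall>x\<in>V - (A \<union> B). s x = t x")
      case True
      have "X s ?m1 = X ?m2 t"
        by (rule alg_inv[OF X s m1 m2 t]) (use True AB in \<open>auto simp: restr_def fun_eq_iff\<close>)
      moreover have "Y ?m1 t = Y s ?m2"
        by (rule alg_inv[OF Y m1 t s m2]) (use True AB in \<open>auto simp: restr_def fun_eq_iff\<close>)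
      ultimately show ?thesis using e1 e2 by simp
    next
      case False
      then obtain x where x: "x \<in> V" "x \<notin> A" "x \<notin> B" "s x \<noteq> t x" by auto
      have "Y ?m1 t = 0" by (rule alg_zero[OF Y m1 t x(1,3)]) (use x in auto)
      moreover have "X ?m2 t = 0" by (rule alg_zero[OF X m2 t x(1,2)]) (use x in auto)
      ultimately show ?thesis using e1 e2 by simp
    qed
  qed
qed

lemma opmult_assoc: "opmult V d (opmult V d X Y) Z = opmult V d X (opmult V d Y Z)"
  unfolding opmult_def
  by (intro ext) (simp add: sum_distrib_left sum_distrib_right mult.assoc, rule sum.swap)

lemma opmult_lin_left: "opmult V d (\<lambda>s t. c * X s t + Y s t) Z = (\<lambda>s t. c * opmult V d X Z s t + opmult V d Y Z s t)"
  unfolding opmult_def by (intro ext) (simp add: sum.distrib sum_distrib_left algebra_simps)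

lemma opmult_lin_right: "opmult V d Z (\<lambda>s t. c * X s t + Y s t) = (\<lambda>s t. c * opmult V d Z X s t + opmult V d Z Y s t)"
  unfolding opmult_def by (intro ext) (simp add: sum.distrib sum_distrib_left algebra_simps)

lemma opmult_sum_left: "opmult V d (\<lambda>s t. \<Sum>b\<in>B. a b * P b s t) W = (\<lambda>s t. \<Sum>b\<in>B. a b * opmult V d (P b) W s t)"
  unfolding opmult_def
  by (intro ext) (simp add: sum_distrib_left sum_distrib_right mult.assoc, rule sum.swap)

lemma opmult_sum_right: "opmult V d W (\<lambda>s t. \<Sum>b\<in>B. a b * P b s t) = (\<lambda>s t. \<Sum>b\<in>B. a b * opmult V d W (P b) s t)"
  unfolding opmult_def
  by (intro ext) (simp add: sum_distrib_left sum_distrib_right mult_ac, rule sum.swap)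

lemma opmult_Ops: "X \<in> Ops V d \<Longrightarrow> Y \<in> Ops V d \<Longrightarrow> opmult V d X Y \<in> Ops V d"
  by (auto simp: Ops_def opmult_def)

lemma lin_Ops: "X \<in> Ops V d \<Longrightarrow> Y \<in> Ops V d \<Longrightarrow> (\<lambda>s t. c * X s t + Y s t) \<in> Ops V d"
  by (auto simp: Ops_def)

lemma opid_Ops: "opid V d \<in> Ops V d"
  by (auto simp: Ops_def opid_def)

lemma opid_left: assumes "finite V" "Y \<in> Ops V d" shows "opmult V d (opid V d) Y = Y"
proof (intro ext)
  fix s t
  show "opmult V d (opid V d) Y s t = Y s t"
  proof (cases "s \<in> conf V d")
    case True
    have "opmult V d (opid V d) Y s t = (\<Sum>u\<in>conf V d. if u = s then Y u t else 0)"
      unfolding opmult_def opid_def using True by (intro sum.cong) auto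
    also have "\<dots> = Y s t" using True finite_conf[OF assms(1)] by simp
    finally show ?thesis .
  next
    case False then show ?thesis using assms(2) by (simp add: opmult_def opid_def Ops_def)
  qed
qed

lemma opid_right: assumes "finite V" "X \<in> Ops V d" shows "opmult V d X (opid V d) = X"
proof (intro ext)
  fix s t
  show "opmult V d X (opid V d) s t = X s t"
  proof (cases "t \<in> conf V d")
    case True
    have "opmult V d X (opid V d) s t = (\<Sum>u\<in>conf V d. if u = t then X s u else 0)"
      unfolding opmult_def opid_def using True by (intro sum.cong) auto
    also have "\<dots> = X s t" using True finite_conf[OF assms(1)] by simp
    finally show ?thesis .
  next
    case False then show ?thesis using assms(2) by (auto simp: opmult_def opid_def Ops_def intro!: sum.neutral)
  qed
qed


definition unitop :: "'v set \<Rightarrow> ('v \<Rightarrow> nat) \<Rightarrow> 'v \<Rightarrow> nat \<Rightarrow> nat \<Rightarrow> 'v op" where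
  "unitop V d x i j = (\<lambda>s t. if s \<in> conf V d \<and> t \<in> conf V d \<and> s x = i \<and> t x = j \<and> (\<forall>y. y \<noteq> x \<longrightarrow> s y = t y) then 1 else 0)"

lemma agree_all: "s \<in> conf V d \<Longrightarrow> t \<in> conf V d \<Longrightarrow> \<forall>y\<in>V - S. s y = t y \<Longrightarrow> y \<notin> S \<Longrightarrow> s y = t y"
  by (cases "y \<in> V") (auto simp: conf_out)

lemma unit_alg: "unitop V d x i j \<in> alg V d {x}"
proof (rule alg_intro)
  show "unitop V d x i j \<in> Ops V d" by (auto simp: Ops_def unitop_def)
next
  fix s t y assume "s \<in> conf V d" "t \<in> conf V d" "y \<in> V" "y \<notin> {x}" "s y \<noteq> t y"
  then show "unitop V d x i j s t = 0" by (auto simp: unitop_def)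
next
  fix s t s' t' assume s: "s \<in> conf V d" and t: "t \<in> conf V d" and s': "s' \<in> conf V d" and t': "t' \<in> conf V d"
    and a1: "\<forall>y\<in>V - {x}. s y = t y" and a2: "\<forall>y\<in>V - {x}. s' y = t' y"
    and r1: "restr {x} s = restr {x} s'" and r2: "restr {x} t = restr {x} t'"
  have b1: "\<forall>y. y \<noteq> x \<longrightarrow> s y = t y" using agree_all[OF s t a1] by auto
  have b2: "\<forall>y. y \<noteq> x \<longrightarrow> s' y = t' y" using agree_all[OF s' t' a2] by auto
  have c1: "s x = s' x" using fun_cong[OF r1, of x] by (simp add: restr_def)
  have c2: "t x = t' x" using fun_cong[OF r2, of x] by (simp add: restr_def)
  show "unitop V d x i j s t = unitop V d x i j s' t'"
    using b1 b2 c1 c2 s t s' t' by (simp add: unitop_def)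
qed

lemma upd_conf: "s \<in> conf V d \<Longrightarrow> x \<in> V \<Longrightarrow> i < d x \<Longrightarrow> s(x := i) \<in> conf V d"
  by (auto simp: conf_def)

lemma unit_left:
  assumes fin: "finite V" and x: "x \<in> V" and i: "i < d x" and s: "s \<in> conf V d" and t: "t \<in> conf V d"
  shows "opmult V d Z (unitop V d x i j) s t = (if t x = j then Z s (t(x:=i)) else 0)"
proof -
  have "opmult V d Z (unitop V d x i j) s t = (\<Sum>u\<in>conf V d. if u = t(x:=i) then (if t x = j then Z s u else 0) else 0)"
    unfolding opmult_def
  proof (intro sum.cong refl)
    fix u assume u: "u \<in> conf V d"
    have "unitop V d x i j u t = (if u = t(x:=i) \<and> t x = j then 1 else 0)"
      using u t upd_conf[OF t x i] by (auto simp: unitop_def fun_eq_iff)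
    then show "Z s u * unitop V d x i j u t = (if u = t(x:=i) then (if t x = j then Z s u else 0) else 0)"
      by auto
  qed
  also have "\<dots> = (if t x = j then Z s (t(x:=i)) else 0)"
    using finite_conf[OF fin] upd_conf[OF t x i] by (simp add: sum.delta)
  finally show ?thesis .
qed

lemma unit_right:
  assumes fin: "finite V" and x: "x \<in> V" and j: "j < d x" and s: "s \<in> conf V d" and t: "t \<in> conf V d"
  shows "opmult V d (unitop V d x i j) Z s t = (if s x = i then Z (s(x:=j)) t else 0)"
proof -
  have "opmult V d (unitop V d x i j) Z s t = (\<Sum>u\<in>conf V d. if u = s(x:=j) then (if s x = i then Z u t else 0) else 0)"
    unfolding opmult_def
  proof (intro sum.cong refl)
    fix u assume u: "u \<in> conf V d"
    have "unitop V d x i j s u = (if u = s(x:=j) \<and> s x = i then 1 else 0)"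
      using u s upd_conf[OF s x j] by (auto simp: unitop_def fun_eq_iff)
    then show "unitop V d x i j s u * Z u t = (if u = s(x:=j) then (if s x = i then Z u t else 0) else 0)"
      by auto
  qed
  also have "\<dots> = (if s x = i then Z (s(x:=j)) t else 0)"
    using finite_conf[OF fin] upd_conf[OF s x j] by (simp add: sum.delta)
  finally show ?thesis .
qed

lemma comm_alg:
  assumes fin: "finite V" and SV: "S \<subseteq> V" and Z: "Z \<in> Ops V d"
    and c: "\<forall>x\<in>S. \<forall>Y\<in>alg V d {x}. opmult V d Z Y = opmult V d Y Z"
  shows "Z \<in> alg V d (V - S)"
proof -
  have rel: "(if t x = j then Z s (t(x:=i)) else 0) = (if s x = i then Z (s(x:=j)) t else 0)"
    if x: "x \<in> S" and s: "s \<in> conf V d" and t: "t \<in> conf V d" and i: "i < d x" and j: "j < d x" for x s t i j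
  proof -
    have xV: "x \<in> V" using x SV by auto
    have "opmult V d Z (unitop V d x i j) s t = opmult V d (unitop V d x i j) Z s t"
      using c x unit_alg by metis
    then show ?thesis using unit_left[OF fin xV i s t] unit_right[OF fin xV j s t] by simp
  qed
  have zero: "Z s t = 0" if x: "x \<in> S" and s: "s \<in> conf V d" and t: "t \<in> conf V d" and ne: "s x \<noteq> t x" for x s t
  proof -
    have xV: "x \<in> V" using x SV by auto
    have tl: "t x < d x" using conf_lt[OF t xV] .
    show ?thesis using rel[OF x s t tl tl] ne by simp
  qed
  have shift: "Z s t = Z (s(x:=i)) (t(x:=i))"
    if x: "x \<in> S" and s: "s \<in> conf V d" and t: "t \<in> conf V d" and eq: "s x = t x" and i: "i < d x" for x s t i
  proof -
    have xV: "x \<in> V" using x SV by auto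
    have tl: "t x < d x" using conf_lt[OF t xV] .
    have "(if t x = t x then Z (s(x:=i)) (t(x:=i)) else 0) = (if (s(x:=i)) x = i then Z ((s(x:=i))(x:=t x)) t else 0)"
      by (rule rel[OF x upd_conf[OF s xV i] t i tl])
    moreover have "(s(x:=i))(x:=t x) = s" using eq by (auto simp: fun_eq_iff)
    ultimately show ?thesis by simp
  qed
  have ind: "finite K \<Longrightarrow> K \<subseteq> S \<Longrightarrow> \<forall>s t s' t'. s \<in> conf V d \<and> t \<in> conf V d \<and> s' \<in> conf V d \<and> t' \<in> conf V d \<and>
     (\<forall>x\<in>K. s x = t x) \<and> (\<forall>x\<in>K. s' x = t' x) \<and> (\<forall>x. x \<notin> K \<longrightarrow> s x = s' x \<and> t x = t' x) \<longrightarrow> Z s t = Z s' t'" for K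
  proof (induction K rule: finite_induct)
    case empty
    then show ?case by (auto simp: fun_eq_iff)
  next
    case (insert x K)
    show ?case
    proof (intro allI impI)
      fix s t s' t'
      assume h: "s \<in> conf V d \<and> t \<in> conf V d \<and> s' \<in> conf V d \<and> t' \<in> conf V d \<and>
     (\<forall>x\<in>insert x K. s x = t x) \<and> (\<forall>x\<in>insert x K. s' x = t' x) \<and> (\<forall>y. y \<notin> insert x K \<longrightarrow> s y = s' y \<and> t y = t' y)"
      have xS: "x \<in> S" using insert by auto
      have xV: "x \<in> V" using xS SV by auto
      have sl: "s' x < d x" using conf_lt[of s' V d x] h xV by auto
      have "Z s t = Z (s(x:=s' x)) (t(x:=s' x))" using shift[OF xS _ _ _ sl, of s t] h by auto
      also have "\<dots> = Z s' t'"
        using insert.IH insert.prems upd_conf[of s V d x "s' x"] upd_conf[of t V d x "s' x"] xV sl h insert.hyps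
        by (auto simp: fun_upd_def)
      finally show "Z s t = Z s' t'" .
    qed
  qed
  have finS: "finite S" using finite_subset[OF SV fin] .
  show ?thesis
  proof (rule alg_intro[OF Z])
    fix s t x assume "s \<in> conf V d" "t \<in> conf V d" "x \<in> V" "x \<notin> V - S" "s x \<noteq> t x"
    then show "Z s t = 0" using zero by auto
  next
    fix s t s' t' assume s: "s \<in> conf V d" and t: "t \<in> conf V d" and s': "s' \<in> conf V d" and t': "t' \<in> conf V d"
      and a1: "\<forall>x\<in>V - (V - S). s x = t x" and a2: "\<forall>x\<in>V - (V - S). s' x = t' x"
      and r1: "restr (V - S) s = restr (V - S) s'" and r2: "restr (V - S) t = restr (V - S) t'"
    have o: "s y = s' y \<and> t y = t' y" if "y \<notin> S" for y
    proof (cases "y \<in> V")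
      case True then show ?thesis using fun_cong[OF r1, of y] fun_cong[OF r2, of y] that by (simp add: restr_def)
    next
      case False then show ?thesis using s t s' t' by (simp add: conf_out)
    qed
    show "Z s t = Z s' t'" using ind[OF finS subset_refl] s t s' t' a1 a2 o SV by blast
  qed
qed


lemma alg_char:
  assumes fin: "finite V" and SV: "S \<subseteq> V" and X: "X \<in> Ops V d"
    and c: "\<forall>x\<in>V - S. \<forall>W\<in>alg V d {x}. opmult V d X W = opmult V d W X"
  shows "X \<in> alg V d S"
proof -
  have "X \<in> alg V d (V - (V - S))" by (rule comm_alg[OF fin _ X c]) auto
  moreover have "V - (V - S) = S" using SV by auto
  ultimately show ?thesis by simp
qed

lemma alg_single_comm: "finite V \<Longrightarrow> X \<in> alg V d S \<Longrightarrow> x \<notin> S \<Longrightarrow> W \<in> alg V d {x} \<Longrightarrow> opmult V d X W = opmult V d W X"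
  by (rule alg_commute) auto

lemma alg_mult:
  assumes fin: "finite V" and SV: "S \<subseteq> V" and X: "X \<in> alg V d S" and Y: "Y \<in> alg V d S"
  shows "opmult V d X Y \<in> alg V d S"
proof (rule alg_char[OF fin SV])
  show "opmult V d X Y \<in> Ops V d" using opmult_Ops alg_ops X Y by blast
  show "\<forall>x\<in>V - S. \<forall>W\<in>alg V d {x}. opmult V d (opmult V d X Y) W = opmult V d W (opmult V d X Y)"
  proof (intro ballI)
    fix x W assume x: "x \<in> V - S" and W: "W \<in> alg V d {x}"
    have 1: "opmult V d X W = opmult V d W X" using alg_single_comm[OF fin X _ W] x by auto
    have 2: "opmult V d Y W = opmult V d W Y" using alg_single_comm[OF fin Y _ W] x by auto
    show "opmult V d (opmult V d X Y) W = opmult V d W (opmult V d X Y)"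
    proof -
      have "opmult V d (opmult V d X Y) W = opmult V d X (opmult V d W Y)" by (simp add: opmult_assoc 2)
      also have "\<dots> = opmult V d (opmult V d X W) Y" by (simp add: opmult_assoc)
      also have "\<dots> = opmult V d W (opmult V d X Y)" by (simp add: opmult_assoc 1)
      finally show ?thesis .
    qed
  qed
qed

lemma alg_lin:
  assumes fin: "finite V" and SV: "S \<subseteq> V" and X: "X \<in> alg V d S" and Y: "Y \<in> alg V d S"
  shows "(\<lambda>s t. c * X s t + Y s t) \<in> alg V d S"
proof (rule alg_char[OF fin SV])
  show "(\<lambda>s t. c * X s t + Y s t) \<in> Ops V d" using lin_Ops alg_ops X Y by blast
  show "\<forall>x\<in>V - S. \<forall>W\<in>alg V d {x}. opmult V d (\<lambda>s t. c * X s t + Y s t) W = opmult V d W (\<lambda>s t. c * X s t + Y s t)"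
  proof (intro ballI)
    fix x W assume x: "x \<in> V - S" and W: "W \<in> alg V d {x}"
    have 1: "opmult V d X W = opmult V d W X" using alg_single_comm[OF fin X _ W] x by auto
    have 2: "opmult V d Y W = opmult V d W Y" using alg_single_comm[OF fin Y _ W] x by auto
    show "opmult V d (\<lambda>s t. c * X s t + Y s t) W = opmult V d W (\<lambda>s t. c * X s t + Y s t)"
      by (simp add: opmult_lin_left opmult_lin_right 1 2)
  qed
qed

lemma alg_opid:
  assumes fin: "finite V" and SV: "S \<subseteq> V"
  shows "opid V d \<in> alg V d S"
proof (rule alg_char[OF fin SV opid_Ops], intro ballI)
  fix x W assume "W \<in> alg V d {x}"
  then have "W \<in> Ops V d" by (rule alg_ops)
  then show "opmult V d (opid V d) W = opmult V d W (opid V d)" using opid_left[OF fin] opid_right[OF fin] by simp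
qed

lemma alg_mono:
  assumes fin: "finite V" and SS: "S \<subseteq> S'" and SV: "S' \<subseteq> V" and X: "X \<in> alg V d S"
  shows "X \<in> alg V d S'"
proof (rule alg_char[OF fin SV alg_ops[OF X]], intro ballI)
  fix x W assume x: "x \<in> V - S'" and W: "W \<in> alg V d {x}"
  show "opmult V d X W = opmult V d W X" using alg_single_comm[OF fin X _ W] x SS by auto
qed

lemma walk_trans: "walk E m x y \<Longrightarrow> walk E n y z \<Longrightarrow> walk E (m + n) x z"
  by (induction rule: walk.induct) (auto intro: walk.intros)

lemma walk_sym: "walk E n x y \<Longrightarrow> walk E n y x"
proof (induction rule: walk.induct)
  case (walk_refl x)
  then show ?case by (rule walk.walk_refl)
next
  case (walk_step x y n z)
  have "walk E (Suc 0) y x" using walk_step(1) by (auto intro: walk.intros)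
  from walk_trans[OF walk_step(3) this] show ?case by simp
qed

lemma within_sym: "within_dist E n x y \<Longrightarrow> within_dist E n y x"
  by (auto simp: within_dist_def intro: walk_sym)

lemma ball_disj:
  assumes "\<forall>a\<in>T1. \<forall>b\<in>T2. \<not> within_dist E (2 * R) a b"
  shows "{y\<in>V. within_dist E R x y} \<inter> T1 = {} \<or> {y\<in>V. within_dist E R x y} \<inter> T2 = {}"
proof (rule ccontr)
  assume "\<not> ?thesis"
  then obtain a b where a: "a \<in> T1" "within_dist E R x a" and b: "b \<in> T2" "within_dist E R x b" by blast
  obtain k1 where k1: "k1 \<le> R" "walk E k1 x a" using a by (auto simp: within_dist_def)
  obtain k2 where k2: "k2 \<le> R" "walk E k2 x b" using b by (auto simp: within_dist_def)
  have "walk E (k1 + k2) a b" using walk_trans[OF walk_sym[OF k1(2)] k2(2)] .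
  then have "within_dist E (2 * R) a b" using k1 k2 by (auto simp: within_dist_def intro!: exI[of _ "k1+k2"])
  then show False using assms a b by blast
qed

lemma qca_Ops: "qca V d E R \<alpha> \<Longrightarrow> X \<in> Ops V d \<Longrightarrow> \<alpha> X \<in> Ops V d"
  by (auto simp: qca_def bij_betw_def)

lemma qca_inj: "qca V d E R \<alpha> \<Longrightarrow> X \<in> Ops V d \<Longrightarrow> Y \<in> Ops V d \<Longrightarrow> \<alpha> X = \<alpha> Y \<Longrightarrow> X = Y"
  by (auto simp: qca_def bij_betw_def inj_on_def)

lemma qca_surj: "qca V d E R \<alpha> \<Longrightarrow> Z \<in> Ops V d \<Longrightarrow> \<exists>X\<in>Ops V d. Z = \<alpha> X"
  by (auto simp: qca_def bij_betw_def)

lemma qca_mult: "qca V d E R \<alpha> \<Longrightarrow> X \<in> Ops V d \<Longrightarrow> Y \<in> Ops V d \<Longrightarrow> \<alpha> (opmult V d X Y) = opmult V d (\<alpha> X) (\<alpha> Y)"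
  by (auto simp: qca_def)

lemma qca_lin: "qca V d E R \<alpha> \<Longrightarrow> X \<in> Ops V d \<Longrightarrow> Y \<in> Ops V d \<Longrightarrow> \<alpha> (\<lambda>s t. c * X s t + Y s t) = (\<lambda>s t. c * \<alpha> X s t + \<alpha> Y s t)"
  by (auto simp: qca_def)

lemma qca_id:
  assumes fin: "finite V" and q: "qca V d E R \<alpha>"
  shows "\<alpha> (opid V d) = opid V d"
proof -
  obtain Z where Z: "Z \<in> Ops V d" "opid V d = \<alpha> Z" using qca_surj[OF q opid_Ops] by blast
  have "opmult V d (\<alpha> (opid V d)) (\<alpha> Z) = \<alpha> (opmult V d (opid V d) Z)" using qca_mult[OF q opid_Ops Z(1)] by simp
  also have "\<dots> = \<alpha> Z" using opid_left[OF fin Z(1)] by simp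
  finally have "opmult V d (\<alpha> (opid V d)) (opid V d) = opid V d" using Z(2) by simp
  then show ?thesis using opid_right[OF fin qca_Ops[OF q opid_Ops]] by simp
qed


lemma cancel:
  assumes fin: "finite V" and UT: "U \<inter> T = {}" and finB: "finite B" and a: "\<forall>b\<in>B. a b \<noteq> 0"
    and CQ: "\<forall>b\<in>B. C b \<in> alg V d U \<and> Q b \<in> alg V d T"
    and orth: "\<forall>b\<in>B. \<forall>c\<in>B. hs V d (Q b) (Q c) = (if b = c then 1 else 0)"
    and sumz: "(\<lambda>s t. \<Sum>b\<in>B. a b * opmult V d (C b) (Q b) s t) = (\<lambda>s t. 0)"
    and g: "g \<in> B"
  shows "C g = (\<lambda>s t. 0)"
proof (intro ext)
  fix s t
  have Cg: "C g \<in> alg V d U" using CQ g by auto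
  show "C g s t = 0"
  proof (cases "s \<in> conf V d \<and> t \<in> conf V d")
    case False then show ?thesis using Ops_zero[OF alg_ops[OF Cg]] by auto
  next
    case True
    then have s: "s \<in> conf V d" and t: "t \<in> conf V d" by auto
    show ?thesis
    proof (cases "\<forall>x\<in>V - U. s x = t x")
      case False then show ?thesis using alg_zero[OF Cg s t] by auto
    next
      case agr: True
      have inner: "(\<Sum>b\<in>B. a b * C b s t * Q b p q) = 0" if p: "p \<in> conf V d" and q: "q \<in> conf V d" for p q
      proof (cases "\<forall>x\<in>V - T. p x = q x")
        case False
        then obtain x where x: "x \<in> V" "x \<notin> T" "p x \<noteq> q x" by auto
        have "Q b p q = 0" if "b \<in> B" for b using alg_zero[of "Q b" V d T p q x] CQ that p q x by auto
        then show ?thesis by simp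
      next
        case agq: True
        define s' where "s' = (\<lambda>x. if x \<in> T then p x else s x)"
        define t' where "t' = (\<lambda>x. if x \<in> T then q x else t x)"
        have s': "s' \<in> conf V d" using s p by (auto simp: conf_def s'_def)
        have t': "t' \<in> conf V d" using t q by (auto simp: conf_def t'_def)
        let ?m = "\<lambda>x. if x \<in> U then t' x else s' x"
        have m: "?m \<in> conf V d" using s' t' by (auto simp: conf_def)
        have eq: "a b * C b s t * Q b p q = a b * opmult V d (C b) (Q b) s' t'" if b: "b \<in> B" for b
        proof -
          have Cb: "C b \<in> alg V d U" and Qb: "Q b \<in> alg V d T" using CQ b by auto
          have "opmult V d (C b) (Q b) s' t' = C b s' ?m * Q b ?m t'" by (rule opmult_disj[OF fin Cb Qb UT s' t'])
          moreover have "C b s' ?m = C b s t"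
            by (rule alg_inv[OF Cb s' m s t]) (use agr UT in \<open>auto simp: restr_def fun_eq_iff s'_def t'_def\<close>)
          moreover have "Q b ?m t' = Q b p q"
            by (rule alg_inv[OF Qb m t' p q]) (use agr agq UT in \<open>auto simp: restr_def fun_eq_iff s'_def t'_def\<close>)
          ultimately show ?thesis by simp
        qed
        have "(\<Sum>b\<in>B. a b * C b s t * Q b p q) = (\<Sum>b\<in>B. a b * opmult V d (C b) (Q b) s' t')"
          using eq by (rule sum.cong[OF refl])
        also have "\<dots> = 0" using fun_cong[OF fun_cong[OF sumz, of s'], of t'] by simp
        finally show ?thesis .
      qed
      have "a g * C g s t = (\<Sum>b\<in>B. if g = b then a b * C b s t else 0)" using finB g by (simp add: sum.delta)
      also have "\<dots> = (\<Sum>b\<in>B. a b * C b s t * hs V d (Q g) (Q b))"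
        using orth g by (intro sum.cong refl) auto
      also have "\<dots> = (\<Sum>b\<in>B. \<Sum>p\<in>conf V d. \<Sum>q\<in>conf V d. cnj (Q g p q) * (a b * C b s t * Q b p q))"
        by (simp add: hs_def sum_distrib_left mult_ac)
      also have "\<dots> = (\<Sum>p\<in>conf V d. \<Sum>q\<in>conf V d. \<Sum>b\<in>B. cnj (Q g p q) * (a b * C b s t * Q b p q))"
        by (subst sum.swap) (simp add: sum.swap[of _ B])
      also have "\<dots> = (\<Sum>p\<in>conf V d. \<Sum>q\<in>conf V d. cnj (Q g p q) * (\<Sum>b\<in>B. a b * C b s t * Q b p q))"
        by (simp add: sum_distrib_left)
      also have "\<dots> = 0" using inner by simp
      finally show ?thesis using a g by simp
    qed
  qed
qed


lemma transfer:
  assumes fin: "finite V" and T1V: "T1 \<subseteq> V" and T2V: "T2 \<subseteq> V" and disj: "T1 \<inter> T2 = {}"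
    and finB: "finite B" and a: "\<forall>b\<in>B. a b \<noteq> 0"
    and Q: "\<forall>b\<in>B. Q1 b \<in> alg V d T1 \<and> Q2 b \<in> alg V d T2"
    and orth: "\<forall>b\<in>B. \<forall>c\<in>B. hs V d (Q2 b) (Q2 c) = (if b = c then 1 else 0)"
    and Xd: "X = (\<lambda>s t. \<Sum>b\<in>B. a b * opmult V d (Q1 b) (Q2 b) s t)"
    and W: "W \<in> alg V d U" and UV: "U \<subseteq> V" and Ud: "U \<inter> T1 = {} \<or> U \<inter> T2 = {}"
    and XW: "opmult V d X W = opmult V d W X" and g: "g \<in> B"
  shows "opmult V d (Q1 g) W = opmult V d W (Q1 g)"
proof (cases "U \<inter> T1 = {}")
  case True
  show ?thesis by (rule alg_commute[OF fin _ W]) (use Q g True in auto)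
next
  case False
  with Ud have UT2: "U \<inter> T2 = {}" by auto
  define C where "C b = (\<lambda>s t. (-1) * opmult V d W (Q1 b) s t + opmult V d (Q1 b) W s t)" for b
  have TU: "T1 \<union> U \<subseteq> V" using T1V UV by auto
  have WU: "W \<in> alg V d (T1 \<union> U)" by (rule alg_mono[OF fin _ TU W]) auto
  have CQ: "\<forall>b\<in>B. C b \<in> alg V d (T1 \<union> U) \<and> Q2 b \<in> alg V d T2"
  proof
    fix b assume b: "b \<in> B"
    have Q1b: "Q1 b \<in> alg V d (T1 \<union> U)" by (rule alg_mono[OF fin _ TU]) (use Q b in auto)
    have "C b \<in> alg V d (T1 \<union> U)" unfolding C_def
      by (intro alg_lin[OF fin TU] alg_mult[OF fin TU] Q1b WU)
    then show "C b \<in> alg V d (T1 \<union> U) \<and> Q2 b \<in> alg V d T2" using Q b by auto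
  qed
  have comm2: "opmult V d (Q2 b) W = opmult V d W (Q2 b)" if "b \<in> B" for b
    by (rule alg_commute[OF fin _ W]) (use Q that UT2 in auto)
  have e1: "opmult V d X W = (\<lambda>s t. \<Sum>b\<in>B. a b * opmult V d (opmult V d (Q1 b) W) (Q2 b) s t)"
  proof -
    have "opmult V d X W = (\<lambda>s t. \<Sum>b\<in>B. a b * opmult V d (opmult V d (Q1 b) (Q2 b)) W s t)"
      unfolding Xd by (rule opmult_sum_left)
    also have "\<dots> = (\<lambda>s t. \<Sum>b\<in>B. a b * opmult V d (opmult V d (Q1 b) W) (Q2 b) s t)"
      using comm2 by (intro ext sum.cong refl) (simp add: opmult_assoc)
    finally show ?thesis .
  qed
  have e2: "opmult V d W X = (\<lambda>s t. \<Sum>b\<in>B. a b * opmult V d (opmult V d W (Q1 b)) (Q2 b) s t)"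
    unfolding Xd by (simp add: opmult_sum_right opmult_assoc)
  have sumz: "(\<lambda>s t. \<Sum>b\<in>B. a b * opmult V d (C b) (Q2 b) s t) = (\<lambda>s t. 0)"
  proof (intro ext)
    fix s t
    have "(\<Sum>b\<in>B. a b * opmult V d (C b) (Q2 b) s t) = opmult V d X W s t - opmult V d W X s t"
      unfolding e1 e2 C_def opmult_lin_left by (simp add: sum_subtractf[symmetric] algebra_simps)
    then show "(\<Sum>b\<in>B. a b * opmult V d (C b) (Q2 b) s t) = 0" using XW by simp
  qed
  have "C g = (\<lambda>s t. 0)"
    by (rule cancel[OF fin _ finB a CQ orth sumz g]) (use disj UT2 in auto)
  then show ?thesis unfolding C_def by (auto simp: fun_eq_iff dest!: fun_cong)
qed


lemma half:
  assumes fin: "finite V" and q: "qca V d E R \<alpha>" and FV: "F \<subseteq> V"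
    and T1V: "T1 \<subseteq> V" and T2V: "T2 \<subseteq> V" and disj: "T1 \<inter> T2 = {}"
    and balls: "\<forall>x. {y\<in>V. within_dist E R x y} \<inter> T1 = {} \<or> {y\<in>V. within_dist E R x y} \<inter> T2 = {}"
    and XP: "X \<in> Palg V d E R \<alpha> F"
    and finB: "finite B" and a: "\<forall>b\<in>B. a b \<noteq> 0"
    and Q: "\<forall>b\<in>B. Q1 b \<in> alg V d T1 \<and> Q2 b \<in> alg V d T2"
    and orth: "\<forall>b\<in>B. \<forall>c\<in>B. hs V d (Q2 b) (Q2 c) = (if b = c then 1 else 0)"
    and Xd: "X = (\<lambda>s t. \<Sum>b\<in>B. a b * opmult V d (Q1 b) (Q2 b) s t)"
    and g: "g \<in> B"
  shows "Q1 g \<in> Palg V d E R \<alpha> F"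
proof -
  from XP obtain X' where X': "X' \<in> alg V d F" "X = \<alpha> X'"
    and Xc: "\<forall>Y\<in>alg V d (Int_reg V E R F). opmult V d X Y = opmult V d Y X"
    by (auto simp: Palg_def)
  have IV: "Int_reg V E R F \<subseteq> V" by (auto simp: Int_reg_def)
  have Q1g: "Q1 g \<in> alg V d T1" using Q g by auto
  note tr = transfer[OF fin T1V T2V disj finB a Q orth Xd]
  have c1: "\<forall>x\<in>Int_reg V E R F. \<forall>W\<in>alg V d {x}. opmult V d (Q1 g) W = opmult V d W (Q1 g)"
  proof (intro ballI)
    fix x W assume x: "x \<in> Int_reg V E R F" and W: "W \<in> alg V d {x}"
    have xV: "{x} \<subseteq> V" using x IV by auto
    have "W \<in> alg V d (Int_reg V E R F)" by (rule alg_mono[OF fin _ IV W]) (use x in auto)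
    then have XW: "opmult V d X W = opmult V d W X" using Xc by auto
    show "opmult V d (Q1 g) W = opmult V d W (Q1 g)"
      by (rule tr[OF W xV _ XW g]) (use disj in auto)
  qed
  have "Q1 g \<in> alg V d (V - Int_reg V E R F)" by (rule comm_alg[OF fin IV alg_ops[OF Q1g] c1])
  then have part2: "\<forall>Y\<in>alg V d (Int_reg V E R F). opmult V d (Q1 g) Y = opmult V d Y (Q1 g)"
    using alg_commute[OF fin] by blast
  obtain Z where Z: "Z \<in> Ops V d" "Q1 g = \<alpha> Z" using qca_surj[OF q alg_ops[OF Q1g]] by blast
  have cz: "\<forall>x\<in>V - F. \<forall>Y\<in>alg V d {x}. opmult V d Z Y = opmult V d Y Z"
  proof (intro ballI)
    fix x Y assume x: "x \<in> V - F" and Y: "Y \<in> alg V d {x}"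
    have YO: "Y \<in> Ops V d" using alg_ops[OF Y] .
    have X'O: "X' \<in> Ops V d" using alg_ops[OF X'(1)] .
    have aY: "\<alpha> Y \<in> alg V d {y\<in>V. within_dist E R x y}" using q x Y by (auto simp: qca_def)
    have "opmult V d X' Y = opmult V d Y X'" using alg_single_comm[OF fin X'(1) _ Y] x by auto
    then have "\<alpha> (opmult V d X' Y) = \<alpha> (opmult V d Y X')" by simp
    then have XW: "opmult V d X (\<alpha> Y) = opmult V d (\<alpha> Y) X"
      using qca_mult[OF q X'O YO] qca_mult[OF q YO X'O] X'(2) by simp
    have "opmult V d (Q1 g) (\<alpha> Y) = opmult V d (\<alpha> Y) (Q1 g)"
      by (rule tr[OF aY _ _ XW g]) (use balls in auto)
    then have "\<alpha> (opmult V d Z Y) = \<alpha> (opmult V d Y Z)"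
      using qca_mult[OF q Z(1) YO] qca_mult[OF q YO Z(1)] Z(2) by simp
    then show "opmult V d Z Y = opmult V d Y Z"
      using qca_inj[OF q opmult_Ops[OF Z(1) YO] opmult_Ops[OF YO Z(1)]] by simp
  qed
  have "Z \<in> alg V d (V - (V - F))" by (rule comm_alg[OF fin _ Z(1) cz]) auto
  moreover have "V - (V - F) = F" using FV by auto
  ultimately have "Z \<in> alg V d F" by simp
  then show ?thesis using part2 Z(2) by (auto simp: Palg_def)
qed

theorem mainTheorem18:
  fixes V :: "'v set" and d :: "'v \<Rightarrow> nat" and E :: "'v \<Rightarrow> 'v \<Rightarrow> bool"
    and R :: nat and \<alpha> :: "'v op \<Rightarrow> 'v op" and F :: "'v set"
  assumes "finite V"
    and "qca V d E R \<alpha>"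
    and "F \<subseteq> V"
  shows "is_subalgebra V d (Palg V d E R \<alpha> F) \<and> loc_fact V d E (2 * R) (Palg V d E R \<alpha> F)"
proof
  note fin = assms(1) and q = assms(2) and FV = assms(3)
  have IV: "Int_reg V E R F \<subseteq> V" by (auto simp: Int_reg_def)
  show "is_subalgebra V d (Palg V d E R \<alpha> F)"
    unfolding is_subalgebra_def
  proof (intro conjI ballI allI)
    show "Palg V d E R \<alpha> F \<subseteq> Ops V d"
    proof
      fix Z assume "Z \<in> Palg V d E R \<alpha> F"
      then obtain X' where "X' \<in> alg V d F" "Z = \<alpha> X'" by (auto simp: Palg_def)
      then show "Z \<in> Ops V d" using qca_Ops[OF q alg_ops] by blast
    qed
  next
    have "opid V d \<in> \<alpha> ` alg V d F" using qca_id[OF fin q] alg_opid[OF fin FV] by (metis image_eqI)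
    moreover have "\<forall>Y\<in>alg V d (Int_reg V E R F). opmult V d (opid V d) Y = opmult V d Y (opid V d)"
      using opid_left[OF fin] opid_right[OF fin] alg_ops by metis
    ultimately show "opid V d \<in> Palg V d E R \<alpha> F" by (simp add: Palg_def)
  next
    fix X Y c assume X: "X \<in> Palg V d E R \<alpha> F" and Y: "Y \<in> Palg V d E R \<alpha> F"
    from X obtain X' where X': "X' \<in> alg V d F" "X = \<alpha> X'"
      and Xc: "\<forall>W\<in>alg V d (Int_reg V E R F). opmult V d X W = opmult V d W X" by (auto simp: Palg_def)
    from Y obtain Y' where Y': "Y' \<in> alg V d F" "Y = \<alpha> Y'"
      and Yc: "\<forall>W\<in>alg V d (Int_reg V E R F). opmult V d Y W = opmult V d W Y" by (auto simp: Palg_def)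
    have "(\<lambda>s t. c * X s t + Y s t) = \<alpha> (\<lambda>s t. c * X' s t + Y' s t)"
      using qca_lin[OF q alg_ops[OF X'(1)] alg_ops[OF Y'(1)]] X'(2) Y'(2) by simp
    moreover have "(\<lambda>s t. c * X' s t + Y' s t) \<in> alg V d F" by (rule alg_lin[OF fin FV X'(1) Y'(1)])
    moreover have "\<forall>W\<in>alg V d (Int_reg V E R F). opmult V d (\<lambda>s t. c * X s t + Y s t) W = opmult V d W (\<lambda>s t. c * X s t + Y s t)"
      using Xc Yc by (simp add: opmult_lin_left opmult_lin_right)
    ultimately show "(\<lambda>s t. c * X s t + Y s t) \<in> Palg V d E R \<alpha> F" by (auto simp: Palg_def)
  next
    fix X Y assume X: "X \<in> Palg V d E R \<alpha> F" and Y: "Y \<in> Palg V d E R \<alpha> F"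
    from X obtain X' where X': "X' \<in> alg V d F" "X = \<alpha> X'"
      and Xc: "\<forall>W\<in>alg V d (Int_reg V E R F). opmult V d X W = opmult V d W X" by (auto simp: Palg_def)
    from Y obtain Y' where Y': "Y' \<in> alg V d F" "Y = \<alpha> Y'"
      and Yc: "\<forall>W\<in>alg V d (Int_reg V E R F). opmult V d Y W = opmult V d W Y" by (auto simp: Palg_def)
    have "opmult V d X Y = \<alpha> (opmult V d X' Y')"
      using qca_mult[OF q alg_ops[OF X'(1)] alg_ops[OF Y'(1)]] X'(2) Y'(2) by simp
    moreover have "opmult V d X' Y' \<in> alg V d F" by (rule alg_mult[OF fin FV X'(1) Y'(1)])
    moreover have "\<forall>W\<in>alg V d (Int_reg V E R F). opmult V d (opmult V d X Y) W = opmult V d W (opmult V d X Y)"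
    proof
      fix W assume W: "W \<in> alg V d (Int_reg V E R F)"
      have "opmult V d (opmult V d X Y) W = opmult V d X (opmult V d W Y)" using Yc W by (simp add: opmult_assoc)
      also have "\<dots> = opmult V d (opmult V d W X) Y" using Xc W by (simp flip: opmult_assoc)
      also have "\<dots> = opmult V d W (opmult V d X Y)" by (simp add: opmult_assoc)
      finally show "opmult V d (opmult V d X Y) W = opmult V d W (opmult V d X Y)" .
    qed
    ultimately show "opmult V d X Y \<in> Palg V d E R \<alpha> F" by (auto simp: Palg_def)
  qed
next
  note fin = assms(1) and q = assms(2) and FV = assms(3)
  show "loc_fact V d E (2 * R) (Palg V d E R \<alpha> F)"
    unfolding loc_fact_def
  proof (intro allI impI ballI)
    fix T1 T2 X and B :: "nat set" and A :: "nat \<Rightarrow> real" and Q1 Q2 b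
    assume h: "T1 \<subseteq> V \<and> T2 \<subseteq> V \<and> T1 \<inter> T2 = {} \<and>
      (\<forall>x\<in>T1. \<forall>y\<in>T2. \<not> within_dist E (2 * R) x y) \<and>
      X \<in> Palg V d E R \<alpha> F \<and> X \<in> alg V d (T1 \<union> T2) \<and>
      finite B \<and> (\<forall>\<beta>\<in>B. A \<beta> > 0) \<and>
      (\<forall>\<beta>\<in>B. Q1 \<beta> \<in> alg V d T1 \<and> Q2 \<beta> \<in> alg V d T2) \<and>
      (\<forall>\<beta>\<in>B. \<forall>\<gamma>\<in>B. hs V d (Q1 \<beta>) (Q1 \<gamma>) = (if \<beta> = \<gamma> then 1 else 0)) \<and>
      (\<forall>\<beta>\<in>B. \<forall>\<gamma>\<in>B. hs V d (Q2 \<beta>) (Q2 \<gamma>) = (if \<beta> = \<gamma> then 1 else 0)) \<and>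
      X = (\<lambda>s t. \<Sum>\<beta>\<in>B. complex_of_real (A \<beta>) * opmult V d (Q1 \<beta>) (Q2 \<beta>) s t)"
      and b: "b \<in> B"
    have T1V: "T1 \<subseteq> V" and T2V: "T2 \<subseteq> V" and disj: "T1 \<inter> T2 = {}" and dist: "\<forall>x\<in>T1. \<forall>y\<in>T2. \<not> within_dist E (2 * R) x y"
      and XP: "X \<in> Palg V d E R \<alpha> F" and finB: "finite B" and Apos: "\<forall>\<beta>\<in>B. A \<beta> > 0"
      and Q: "\<forall>\<beta>\<in>B. Q1 \<beta> \<in> alg V d T1 \<and> Q2 \<beta> \<in> alg V d T2"
      and o1: "\<forall>\<beta>\<in>B. \<forall>\<gamma>\<in>B. hs V d (Q1 \<beta>) (Q1 \<gamma>) = (if \<beta> = \<gamma> then 1 else 0)"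
      and o2: "\<forall>\<beta>\<in>B. \<forall>\<gamma>\<in>B. hs V d (Q2 \<beta>) (Q2 \<gamma>) = (if \<beta> = \<gamma> then 1 else 0)"
      and Xd: "X = (\<lambda>s t. \<Sum>\<beta>\<in>B. complex_of_real (A \<beta>) * opmult V d (Q1 \<beta>) (Q2 \<beta>) s t)"
      using h by auto
    have a: "\<forall>\<beta>\<in>B. complex_of_real (A \<beta>) \<noteq> 0" using Apos by (auto simp: less_irrefl)
    have balls: "\<forall>x. {y\<in>V. within_dist E R x y} \<inter> T1 = {} \<or> {y\<in>V. within_dist E R x y} \<inter> T2 = {}"
      using ball_disj[OF dist] by blast
    have "Q1 b \<in> Palg V d E R \<alpha> F"
      by (rule half[OF fin q FV T1V T2V disj balls XP finB a Q o2 Xd b])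
    moreover have "Q2 b \<in> Palg V d E R \<alpha> F"
    proof (rule half[OF fin q FV T2V T1V _ _ XP finB a _ o1 _ b])
      show "T2 \<inter> T1 = {}" using disj by auto
      show "\<forall>x. {y\<in>V. within_dist E R x y} \<inter> T2 = {} \<or> {y\<in>V. within_dist E R x y} \<inter> T1 = {}" using balls by blast
      show "\<forall>\<beta>\<in>B. Q2 \<beta> \<in> alg V d T2 \<and> Q1 \<beta> \<in> alg V d T1" using Q by auto
      show "X = (\<lambda>s t. \<Sum>\<beta>\<in>B. complex_of_real (A \<beta>) * opmult V d (Q2 \<beta>) (Q1 \<beta>) s t)"
        unfolding Xd using Q disj alg_commute[OF fin] by (intro ext sum.cong refl) (metis)
    qed
    ultimately show "Q1 b \<in> Palg V d E R \<alpha> F \<and> Q2 b \<in> Palg V d E R \<alpha> F" by blast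
  qed
qed

end
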